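(* Let $M\in\mathbb{R}^{n\times n}$ be symmetric with eigenvalues ordered so that $|\lambda_1|\ge|\lambda_2|\ge\cdots$, where $\lambda=\lambda_1>0$ and $\lambda_1>|\lambda_2|$. Let $u$ be the unit leading eigenvector, $l_2=|\lambda_2|/\lambda$, and $0<\theta\le\frac1{40}(1-l_2)^{3/2}$. Let $\{S^{(\ell)}\}_{\ell\ge1}$ be i.i.d. random $n\times n$ matrices such that: - $\mathbb{E}[S^{(\ell)}]=M$; - $\|S^{(\ell)}-M\|_2\le\theta\|M\|_2$; - $S^{(\ell)}$ is almost surely non-singular; - no proper subspace $V$ satisfies $S^{(\ell)}V\subseteq V$ almost surely. Define $\mathsf G=\{\mathbf x\in\mathsf P_n: d(\mathbf x,\mathbf u)\le 2\theta/(1-l_2)\}$, where $\mathbf u$ is the class of $u$. Then: 1. For any $\mathbf x\in\mathsf G$, $S^{(\ell)}\mathbf x\in\mathsf G$. 2. With $\rho\equiv1-\frac45(1-l_2)\in(0,1)$, for any $\mathbf x\ne\mathbf y\in\mathsf G$, $$\mathbb{E}\,d(S^{(\ell)}\mathbf x,S^{(\ell)}\mathbf y)\le\rho\,d(\mathbf x,\mathbf y).$$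
   Context: $\mathsf P_n$ is the projective space (unit vectors of $\mathbb{R}^n$ modulo sign), with metric $d(\mathbf x,\mathbf y)=\sqrt{1-\langle x,y\rangle^2}$ for unit representatives $x,y$. An invertible matrix $S$ acts on $\mathsf P_n$ by mapping the class of $x$ to the class of $Sx/\|Sx\|$. $\|\cdot\|_2$ is the operator norm. *)

theory Defs
  imports "HOL-Analysis.Analysis" "HOL-Probability.Probability"
begin

text \<open>Points of the projective space P_n are represented by unit vectors of R^n;
  a unit vector and its negative represent the same point.\<close>

definition proj_pt :: "real^'n \<Rightarrow> bool" where
  "proj_pt x \<longleftrightarrow> norm x = 1"

definition proj_dist :: "real^'n \<Rightarrow> real^'n \<Rightarrow> real" where
  "proj_dist x y = sqrt (1 - (x \<bullet> y)^2)"

definition proj_act :: "real^'n^'n \<Rightarrow> real^'n \<Rightarrow> real^'n" where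
  "proj_act S x = (1 / norm (S *v x)) *\<^sub>R (S *v x)"

definition op_norm2 :: "real^'n^'n \<Rightarrow> real" where
  "op_norm2 A = onorm (\<lambda>x. A *v x)"

end

theory Submission
  imports Defs
begin

lemma inner_expand:
  fixes a b :: "real^'n"
  shows "(a - t *\<^sub>R b) \<bullet> (a - t *\<^sub>R b) = a \<bullet> a - 2 * t * (a \<bullet> b) + t^2 * (b \<bullet> b)"
proof -
  have "b \<bullet> a = a \<bullet> b" by (rule inner_commute)
  then show ?thesis by (simp add: inner_diff_left inner_diff_right power2_eq_square algebra_simps)
qed

lemma pd_unit:
  fixes a b :: "real^'n"
  assumes "norm a = 1" "norm b = 1"
  shows "proj_dist a b = norm (a - (a \<bullet> b) *\<^sub>R b)"
proof -
  have aa: "a \<bullet> a = 1" "b \<bullet> b = 1" using assms by (simp_all add: dot_square_norm)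
  have "(norm (a - (a \<bullet> b) *\<^sub>R b))^2 = (a - (a \<bullet> b) *\<^sub>R b) \<bullet> (a - (a \<bullet> b) *\<^sub>R b)"
    by (rule power2_norm_eq_inner)
  also have "\<dots> = 1 - (a \<bullet> b)^2"
    unfolding inner_expand aa by (simp add: power2_eq_square)
  finally have "(norm (a - (a \<bullet> b) *\<^sub>R b))^2 = 1 - (a \<bullet> b)^2" .
  then have "proj_dist a b = sqrt ((norm (a - (a \<bullet> b) *\<^sub>R b))^2)" unfolding proj_dist_def by simp
  then show ?thesis by simp
qed

lemma perp_le:
  fixes z b :: "real^'n"
  assumes "b \<noteq> 0"
  shows "norm (z - ((z \<bullet> b) / (norm b)^2) *\<^sub>R b) \<le> norm z"
proof -
  have nb: "(norm b)^2 = b \<bullet> b" by (simp add: power2_norm_eq_inner)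
  have pos: "b \<bullet> b > 0" using assms by simp
  have "(norm (z - ((z \<bullet> b) / (norm b)^2) *\<^sub>R b))^2 = (z - ((z \<bullet> b) / (b \<bullet> b)) *\<^sub>R b) \<bullet> (z - ((z \<bullet> b) / (b \<bullet> b)) *\<^sub>R b)"
    unfolding nb by (rule power2_norm_eq_inner)
  also have "\<dots> = z \<bullet> z - (z \<bullet> b)^2 / (b \<bullet> b)"
  proof -
    have e: "\<And>t k::real. k > 0 \<Longrightarrow> - 2 * (t / k) * t + (t/k)^2 * k = - (t^2/k)"
    proof -
      fix t k :: real assume "k > 0"
      then have "(t/k)^2 * k = t^2/k" "2 * (t / k) * t = 2 * (t^2/k)" by (simp_all add: power2_eq_square)
      then show "- 2 * (t / k) * t + (t/k)^2 * k = - (t^2/k)" by linarith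
    qed
    show ?thesis unfolding inner_expand using e[OF pos, of "z \<bullet> b"] by linarith
  qed
  also have "z \<bullet> z = (norm z)^2" by (simp add: power2_norm_eq_inner)
  finally have "(norm (z - ((z \<bullet> b) / (norm b)^2) *\<^sub>R b))^2 = (norm z)^2 - (z \<bullet> b)^2 / (b \<bullet> b)" .
  also have "\<dots> \<le> (norm z)^2" using pos by simp
  finally have "(norm (z - ((z \<bullet> b) / (norm b)^2) *\<^sub>R b))^2 \<le> (norm z)^2" .
  then show ?thesis by (rule power2_le_imp_le) simp
qed

lemma act_dist2:
  fixes a b :: "real^'n"
  assumes "a \<noteq> 0" "b \<noteq> 0"
  shows "proj_dist ((1/norm a) *\<^sub>R a) ((1/norm b) *\<^sub>R b) = norm (a - ((a \<bullet> b)/(norm b)^2) *\<^sub>R b) / norm a"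
proof -
  have "proj_dist ((1/norm a) *\<^sub>R a) ((1/norm b) *\<^sub>R b) =
     norm ((1/norm a) *\<^sub>R a - (((1/norm a) *\<^sub>R a) \<bullet> ((1/norm b) *\<^sub>R b)) *\<^sub>R ((1/norm b) *\<^sub>R b))"
    using assms by (intro pd_unit) auto
  also have "(1/norm a) *\<^sub>R a - (((1/norm a) *\<^sub>R a) \<bullet> ((1/norm b) *\<^sub>R b)) *\<^sub>R ((1/norm b) *\<^sub>R b)
      = (1/norm a) *\<^sub>R (a - ((a \<bullet> b)/(norm b)^2) *\<^sub>R b)"
    by (simp add: scaleR_diff_right power2_eq_square)
  finally show ?thesis by (simp add: divide_inverse mult.commute)
qed

lemma act_dist1:
  fixes v u :: "real^'n"
  assumes "v \<noteq> 0" "norm u = 1"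
  shows "proj_dist ((1/norm v) *\<^sub>R v) u = norm (v - (v \<bullet> u) *\<^sub>R u) / norm v"
proof -
  have "proj_dist ((1/norm v) *\<^sub>R v) u = proj_dist ((1/norm v) *\<^sub>R v) ((1/norm u) *\<^sub>R u)"
    using assms by simp
  also have "\<dots> = norm (v - ((v \<bullet> u)/(norm u)^2) *\<^sub>R u) / norm v"
    using assms by (intro act_dist2) auto
  finally show ?thesis using assms by simp
qed
lemma expansion:
  fixes v :: "nat \<Rightarrow> real^'n"
  assumes eigbasis: "\<forall>i\<in>{1..CARD('n)}. \<forall>j\<in>{1..CARD('n)}. v i \<bullet> v j = (if i = j then 1 else 0)"
  shows "x = (\<Sum>i\<in>{1..CARD('n)}. (x \<bullet> v i) *\<^sub>R v i)"
proof -
  let ?I = "{1..CARD('n)}"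
  have inj: "inj_on v ?I"
    by (rule inj_onI) (metis assms zero_neq_one)
  have nz: "0 \<notin> v ` ?I" using assms by force
  have po: "pairwise orthogonal (v ` ?I)"
    unfolding pairwise_def orthogonal_def using assms by force
  have ind: "independent (v ` ?I)" by (rule pairwise_orthogonal_independent[OF po nz])
  have card: "card (v ` ?I) = dim (UNIV :: (real^'n) set)"
    using card_image[OF inj] by simp
  have sp: "UNIV \<subseteq> span (v ` ?I)"
    using card_eq_dim[of "v ` ?I" UNIV] ind card by simp
  let ?z = "x - (\<Sum>i\<in>?I. (x \<bullet> v i) *\<^sub>R v i)"
  have orth: "orthogonal ?z y" if yin: "y \<in> v ` ?I" for y
  proof -
    obtain j where j: "j \<in> ?I" "y = v j" using yin by blast
    have "(\<Sum>i\<in>?I. (x \<bullet> v i) *\<^sub>R v i) \<bullet> v j = (\<Sum>i\<in>?I. (x \<bullet> v i) * (v i \<bullet> v j))"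
      by (simp add: inner_sum_left)
    also have "\<dots> = (\<Sum>i\<in>?I. if i = j then x \<bullet> v i else 0)"
      using j(1) assms by (intro sum.cong) auto
    also have "\<dots> = x \<bullet> v j" using j(1) by simp
    finally show ?thesis unfolding orthogonal_def j(2) by (simp add: inner_diff_left)
  qed
  have "orthogonal ?z ?z" using orthogonal_to_span[OF _ orth] sp by blast
  then show ?thesis unfolding orthogonal_def by simp
qed
lemma normsq:
  fixes v :: "nat \<Rightarrow> real^'n"
  assumes eigbasis: "\<forall>i\<in>{1..CARD('n)}. \<forall>j\<in>{1..CARD('n)}. v i \<bullet> v j = (if i = j then 1 else 0)"
  shows "(norm (\<Sum>i\<in>{1..CARD('n)}. a i *\<^sub>R v i))^2 = (\<Sum>i\<in>{1..CARD('n)}. (a i)^2)"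
proof -
  let ?I = "{1..CARD('n)}"
  have "(norm (\<Sum>i\<in>?I. a i *\<^sub>R v i))^2 = (\<Sum>i\<in>?I. a i *\<^sub>R v i) \<bullet> (\<Sum>j\<in>?I. a j *\<^sub>R v j)"
    by (rule power2_norm_eq_inner)
  also have "\<dots> = (\<Sum>i\<in>?I. a i * (v i \<bullet> (\<Sum>j\<in>?I. a j *\<^sub>R v j)))"
    by (simp add: inner_sum_left)
  also have "\<dots> = (\<Sum>i\<in>?I. a i * a i)"
  proof (intro sum.cong refl)
    fix i assume i: "i \<in> ?I"
    have "v i \<bullet> (\<Sum>j\<in>?I. a j *\<^sub>R v j) = (\<Sum>j\<in>?I. a j * (v i \<bullet> v j))"
      by (simp add: inner_sum_right)
    also have "\<dots> = (\<Sum>j\<in>?I. if j = i then a i else 0)"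
      using assms i by (intro sum.cong refl) auto
    also have "\<dots> = a i" using i by simp
    finally show "a i * (v i \<bullet> (\<Sum>j\<in>?I. a j *\<^sub>R v j)) = a i * a i" by simp
  qed
  also have "\<dots> = (\<Sum>i\<in>?I. (a i)^2)" by (simp add: power2_eq_square)
  finally show ?thesis .
qed

lemma Mexp:
  fixes v :: "nat \<Rightarrow> real^'n" and M :: "real^'n^'n"
  assumes eigbasis: "\<forall>i\<in>{1..CARD('n)}. \<forall>j\<in>{1..CARD('n)}. v i \<bullet> v j = (if i = j then 1 else 0)"
    and eigvec: "\<forall>i\<in>{1..CARD('n)}. M *v v i = lam i *\<^sub>R v i"
  shows "M *v x = (\<Sum>i\<in>{1..CARD('n)}. (lam i * (x \<bullet> v i)) *\<^sub>R v i)"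
proof -
  have "M *v x = M *v (\<Sum>i\<in>{1..CARD('n)}. (x \<bullet> v i) *\<^sub>R v i)"
    using expansion[OF eigbasis] by metis
  also have "\<dots> = (\<Sum>i\<in>{1..CARD('n)}. (x \<bullet> v i) *\<^sub>R (M *v v i))"
    by (simp add: linear_sum[OF matrix_vector_mul_linear] o_def matrix_vector_mult_scaleR)
  also have "\<dots> = (\<Sum>i\<in>{1..CARD('n)}. (lam i * (x \<bullet> v i)) *\<^sub>R v i)"
    using eigvec by (intro sum.cong) auto
  finally show ?thesis .
qed
lemma spectral:
  fixes M :: "real^'n^'n" and lam :: "nat \<Rightarrow> real" and v :: "nat \<Rightarrow> real^'n" and u :: "real^'n"
  assumes dim: "CARD('n) \<ge> 2"
    and sym: "transpose M = M"
    and eigbasis: "\<forall>i\<in>{1..CARD('n)}. \<forall>j\<in>{1..CARD('n)}. v i \<bullet> v j = (if i = j then 1 else 0)"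
    and eigvec: "\<forall>i\<in>{1..CARD('n)}. M *v v i = lam i *\<^sub>R v i"
    and ordered: "\<forall>i. 1 \<le> i \<and> i < CARD('n) \<longrightarrow> \<bar>lam (Suc i)\<bar> \<le> \<bar>lam i\<bar>"
    and lam1_pos: "lam 1 > 0"
    and gap: "lam 1 > \<bar>lam 2\<bar>"
    and u_unit: "norm u = 1"
    and u_eig: "M *v u = lam 1 *\<^sub>R u"
  shows "\<forall>x. norm (M *v x) \<le> lam 1 * norm x"
    and "\<forall>w. w \<bullet> u = 0 \<longrightarrow> norm (M *v w) \<le> \<bar>lam 2\<bar> * norm w \<and> (M *v w) \<bullet> u = 0"
proof -
  let ?I = "{1..CARD('n)}"
  have symm: "(M *v a) \<bullet> b = a \<bullet> (M *v b)" for a b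
  proof -
    have "a v* M = M *v a" using transpose_matrix_vector[of M a] sym by simp
    then show ?thesis using dot_lmul_matrix[of a M b] by simp
  qed
  have lam2b: "\<bar>lam i\<bar> \<le> \<bar>lam 2\<bar>" if "2 \<le> i" "i \<le> CARD('n)" for i
    using that
  proof (induction i rule: dec_induct)
    case base then show ?case by simp
  next
    case (step k)
    then show ?case using ordered[rule_format, of k] by simp
  qed
  have lam1b: "\<bar>lam i\<bar> \<le> lam 1" if "i \<in> ?I" for i
  proof (cases "i = 1")
    case True then show ?thesis using lam1_pos by simp
  next
    case False then show ?thesis using that lam2b[of i] gap by auto
  qed
  have uv: "u \<bullet> v i = 0" if "i \<in> ?I" "i \<noteq> 1" for i
  proof -
    have "lam 1 * (u \<bullet> v i) = (M *v u) \<bullet> v i" using u_eig by simp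
    also have "\<dots> = u \<bullet> (M *v v i)" by (rule symm)
    also have "\<dots> = lam i * (u \<bullet> v i)" using eigvec that by simp
    finally have "(lam 1 - lam i) * (u \<bullet> v i) = 0" by (simp add: algebra_simps)
    moreover have "lam 1 \<noteq> lam i" using that lam2b[of i] gap by auto
    ultimately show ?thesis by simp
  qed
  have one: "1 \<in> ?I" using dim by simp
  have uexp: "u = (u \<bullet> v 1) *\<^sub>R v 1"
  proof -
    have "u = (\<Sum>i\<in>?I. (u \<bullet> v i) *\<^sub>R v i)" by (rule expansion[OF eigbasis])
    also have "\<dots> = (\<Sum>i\<in>?I. if i = 1 then (u \<bullet> v 1) *\<^sub>R v 1 else 0)"
      using uv by (intro sum.cong refl) auto
    also have "\<dots> = (u \<bullet> v 1) *\<^sub>R v 1" using one by simp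
    finally show ?thesis .
  qed
  have uv1: "u \<bullet> v 1 \<noteq> 0"
  proof
    assume z: "u \<bullet> v 1 = 0"
    have "u = (u \<bullet> v 1) *\<^sub>R v 1" by (rule uexp)
    then have "u = 0" unfolding z by simp
    then show False using u_unit by simp
  qed
  have nsq: "(norm (M *v x))^2 = (\<Sum>i\<in>?I. (lam i)^2 * (x \<bullet> v i)^2)" for x
    unfolding Mexp[OF eigbasis eigvec, of x] normsq[OF eigbasis] by (simp add: power_mult_distrib)
  have xsq: "(norm x)^2 = (\<Sum>i\<in>?I. (x \<bullet> v i)^2)" for x
  proof -
    have "norm x = norm (\<Sum>i\<in>?I. (x \<bullet> v i) *\<^sub>R v i)"
      using expansion[OF eigbasis, of x] by (rule arg_cong)
    then show ?thesis using normsq[OF eigbasis, of "\<lambda>i. x \<bullet> v i"] by simp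
  qed
  show "\<forall>x. norm (M *v x) \<le> lam 1 * norm x"
  proof
    fix x
    have "(norm (M *v x))^2 \<le> (\<Sum>i\<in>?I. (lam 1)^2 * (x \<bullet> v i)^2)"
      unfolding nsq
    proof (intro sum_mono mult_right_mono)
      fix i assume "i \<in> ?I"
      then have "\<bar>lam i\<bar> \<le> \<bar>lam 1\<bar>" using lam1b[of i] lam1_pos by simp
      then show "(lam i)^2 \<le> (lam 1)^2" by (subst abs_le_square_iff[symmetric])
    next
      fix i show "0 \<le> (x \<bullet> v i)^2" by (rule zero_le_power2)
    qed
    also have "\<dots> = (lam 1)^2 * (norm x)^2" unfolding xsq[of x] by (rule sum_distrib_left[symmetric])
    also have "\<dots> = (lam 1 * norm x)^2" by (rule power_mult_distrib[symmetric])
    finally have "(norm (M *v x))^2 \<le> (lam 1 * norm x)^2" .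
    moreover have "0 \<le> lam 1 * norm x" using lam1_pos by simp
    ultimately show "norm (M *v x) \<le> lam 1 * norm x" by (rule power2_le_imp_le)
  qed
  show "\<forall>w. w \<bullet> u = 0 \<longrightarrow> norm (M *v w) \<le> \<bar>lam 2\<bar> * norm w \<and> (M *v w) \<bullet> u = 0"
  proof (intro allI impI conjI)
    fix w assume wu: "w \<bullet> u = 0"
    have "w \<bullet> u = w \<bullet> ((u \<bullet> v 1) *\<^sub>R v 1)" using uexp by (rule arg_cong)
    then have "w \<bullet> u = (u \<bullet> v 1) * (w \<bullet> v 1)" by simp
    then have wv1: "w \<bullet> v 1 = 0" using wu uv1 by simp
    have "(norm (M *v w))^2 \<le> (\<Sum>i\<in>?I. (lam 2)^2 * (w \<bullet> v i)^2)"
      unfolding nsq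
    proof (intro sum_mono)
      fix i assume i: "i \<in> ?I"
      show "(lam i)^2 * (w \<bullet> v i)^2 \<le> (lam 2)^2 * (w \<bullet> v i)^2"
      proof (cases "i = 1")
        case True then show ?thesis using wv1 by simp
      next
        case False
        then have "\<bar>lam i\<bar> \<le> \<bar>lam 2\<bar>" using i lam2b[of i] by auto
        then have "(lam i)^2 \<le> (lam 2)^2" by (simp add: abs_le_square_iff)
        then show ?thesis by (intro mult_right_mono) auto
      qed
    qed
    also have "\<dots> = (lam 2)^2 * (norm w)^2" unfolding xsq[of w] by (rule sum_distrib_left[symmetric])
    also have "\<dots> = (\<bar>lam 2\<bar> * norm w)^2" by (simp add: power_mult_distrib)
    finally have "(norm (M *v w))^2 \<le> (\<bar>lam 2\<bar> * norm w)^2" .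
    moreover have "0 \<le> \<bar>lam 2\<bar> * norm w" by simp
    ultimately show "norm (M *v w) \<le> \<bar>lam 2\<bar> * norm w" by (rule power2_le_imp_le)
    have "(M *v w) \<bullet> u = w \<bullet> (M *v u)" by (rule symm)
    then show "(M *v w) \<bullet> u = 0" using u_eig wu by simp
  qed
qed


lemma decomp:
  fixes x u :: "real^'n"
  assumes "norm x = 1" "norm u = 1" "proj_dist x u \<le> r"
  shows "norm (x - (x \<bullet> u) *\<^sub>R u) \<le> r" "\<bar>x \<bullet> u\<bar> \<ge> 1 - r^2"
proof -
  show n: "norm (x - (x \<bullet> u) *\<^sub>R u) \<le> r" using pd_unit[OF assms(1,2)] assms(3) by simp
  have xx: "x \<bullet> x = 1" "u \<bullet> u = 1" using assms by (simp_all add: dot_square_norm)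
  have "(norm (x - (x \<bullet> u) *\<^sub>R u))^2 = (x - (x \<bullet> u) *\<^sub>R u) \<bullet> (x - (x \<bullet> u) *\<^sub>R u)"
    by (rule power2_norm_eq_inner)
  also have "\<dots> = 1 - (x \<bullet> u)^2"
    unfolding inner_expand xx by (simp add: power2_eq_square)
  finally have e: "(norm (x - (x \<bullet> u) *\<^sub>R u))^2 = 1 - (x \<bullet> u)^2" .
  have "(norm (x - (x \<bullet> u) *\<^sub>R u))^2 \<le> r^2"
    using n by (intro power_mono) auto
  then have c2: "(x \<bullet> u)^2 \<ge> 1 - r^2" using e by linarith
  have "\<bar>x \<bullet> u\<bar> \<le> norm x * norm u" by (rule Cauchy_Schwarz_ineq2)
  then have a1: "\<bar>x \<bullet> u\<bar> \<le> 1" using assms by simp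
  have "(x \<bullet> u)^2 = \<bar>x \<bullet> u\<bar> * \<bar>x \<bullet> u\<bar>" by (simp add: power2_eq_square abs_mult_self_eq)
  also have "\<dots> \<le> \<bar>x \<bullet> u\<bar> * 1" using a1 by (intro mult_left_mono) auto
  finally show "\<bar>x \<bullet> u\<bar> \<ge> 1 - r^2" using c2 by simp
qed

context
  fixes S M :: "real^'n^'n" and u :: "real^'n" and L k \<theta> :: real
  assumes u1: "norm u = 1" and uM: "M *v u = L *\<^sub>R u" and Lpos: "L > 0"
    and Mperp: "\<forall>w. w \<bullet> u = 0 \<longrightarrow> norm (M *v w) \<le> k * norm w \<and> (M *v w) \<bullet> u = 0"
    and kpos: "k \<ge> 0"
    and Eb: "\<forall>z. norm ((S - M) *v z) \<le> \<theta> * L * norm z"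
    and thpos: "\<theta> \<ge> 0"
begin

lemma Sx_split: "S *v z = M *v z + (S - M) *v z"
  by (simp add: matrix_vector_mult_diff_rdistrib)

lemma Mx_split: "M *v x = ((x \<bullet> u) * L) *\<^sub>R u + M *v (x - (x \<bullet> u) *\<^sub>R u)"
  by (simp add: matrix_vector_right_distrib matrix_vector_mult_scaleR matrix_vector_mult_diff_distrib uM)

lemma perp_u: "(x - (x \<bullet> u) *\<^sub>R u) \<bullet> u = 0"
proof -
  have "u \<bullet> u = 1" using u1 by (simp add: dot_square_norm)
  then show ?thesis by (simp add: inner_diff_left)
qed

lemma step1:
  fixes x :: "real^'n" and r c1 :: real
  assumes x1: "norm x = 1" and dx: "proj_dist x u \<le> r"
    and c1: "c1 = 1 - r^2" and c1th: "c1 > \<theta>"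
  shows "S *v x \<noteq> 0" "norm (S *v x) \<ge> L * (c1 - \<theta>)"
    "norm (S *v x - ((S *v x) \<bullet> u) *\<^sub>R u) \<le> k * r + \<theta> * L"
proof -
  define c where "c = x \<bullet> u"
  define x' where "x' = x - c *\<^sub>R u"
  define e where "e = (S - M) *v x"
  have x'u: "x' \<bullet> u = 0" unfolding x'_def c_def by (rule perp_u)
  have nx': "norm x' \<le> r" using decomp(1)[OF x1 u1 dx] unfolding x'_def c_def .
  have cge: "\<bar>c\<bar> \<ge> c1" using decomp(2)[OF x1 u1 dx] unfolding c_def c1 .
  have ne: "norm e \<le> \<theta> * L" using Eb[rule_format, of x] x1 unfolding e_def by simp
  have v: "S *v x = (c * L) *\<^sub>R u + M *v x' + e"
    unfolding e_def x'_def c_def using Sx_split[of x] Mx_split[of x] by simp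
  have uu: "u \<bullet> u = 1" using u1 by (simp add: dot_square_norm)
  have Mx'u: "(M *v x') \<bullet> u = 0" using Mperp x'u by blast
  have vu: "(S *v x) \<bullet> u = c * L + e \<bullet> u"
    unfolding v by (simp add: inner_add_left uu Mx'u)
  have eu: "\<bar>e \<bullet> u\<bar> \<le> \<theta> * L"
    using Cauchy_Schwarz_ineq2[of e u] u1 ne by simp
  have "\<bar>c * L\<bar> \<ge> c1 * L" using cge Lpos by (simp add: abs_mult)
  then have vul: "\<bar>(S *v x) \<bullet> u\<bar> \<ge> L * (c1 - \<theta>)" unfolding vu using eu
    by (simp add: algebra_simps)
  have "\<bar>(S *v x) \<bullet> u\<bar> \<le> norm (S *v x) * norm u" by (rule Cauchy_Schwarz_ineq2)
  then show nv: "norm (S *v x) \<ge> L * (c1 - \<theta>)" using vul u1 by simp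
  moreover have "L * (c1 - \<theta>) > 0" using Lpos c1th by simp
  ultimately show "S *v x \<noteq> 0" by auto
  have "S *v x - ((S *v x) \<bullet> u) *\<^sub>R u = M *v x' + (e - (e \<bullet> u) *\<^sub>R u)"
    unfolding vu unfolding v by (simp add: algebra_simps)
  also have "norm \<dots> \<le> norm (M *v x') + norm (e - (e \<bullet> u) *\<^sub>R u)" by (rule norm_triangle_ineq)
  also have "norm (M *v x') \<le> k * r"
    using Mperp x'u nx' kpos by (meson mult_left_mono order_trans)
  also have "norm (e - (e \<bullet> u) *\<^sub>R u) \<le> \<theta> * L"
  proof -
    have "u \<noteq> 0" using u1 by auto
    then have "norm (e - (e \<bullet> u) *\<^sub>R u) \<le> norm e" using perp_le[of u e] u1 by simp
    then show ?thesis using ne by linarith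
  qed
  finally show "norm (S *v x - ((S *v x) \<bullet> u) *\<^sub>R u) \<le> k * r + \<theta> * L" by simp
qed

lemma step1b:
  fixes x :: "real^'n" and r c1 :: real
  assumes x1: "norm x = 1" and dx: "proj_dist x u \<le> r"
    and c1: "c1 = 1 - r^2" and c1th: "c1 > \<theta>"
    and H1: "k * r + \<theta> * L \<le> r * (L * (c1 - \<theta>))"
  shows "proj_dist (proj_act S x) u \<le> r" "norm (proj_act S x) = 1"
proof -
  have nz: "S *v x \<noteq> 0" by (rule step1(1)[OF x1 dx c1 c1th])
  have pos: "L * (c1 - \<theta>) > 0" using Lpos c1th by simp
  have "proj_dist (proj_act S x) u = norm (S *v x - ((S *v x) \<bullet> u) *\<^sub>R u) / norm (S *v x)"
    unfolding proj_act_def by (rule act_dist1[OF nz u1])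
  also have "\<dots> \<le> (k * r + \<theta> * L) / (L * (c1 - \<theta>))"
  proof -
    have h: "norm (S *v x - ((S *v x) \<bullet> u) *\<^sub>R u) \<le> k * r + \<theta> * L" by (rule step1(3)[OF x1 dx c1 c1th])
    have "0 \<le> k * r + \<theta> * L" using order_trans[OF norm_ge_zero h] .
    then show ?thesis using step1(2)[OF x1 dx c1 c1th] h pos by (intro frac_le) auto
  qed
  also have "\<dots> \<le> r" using H1 pos by (simp add: divide_le_eq)
  finally show "proj_dist (proj_act S x) u \<le> r" .
  show "norm (proj_act S x) = 1" unfolding proj_act_def using nz by simp
qed

lemma Q_lin:
  fixes p q b :: "real^'n"
  shows "(s *\<^sub>R p + q) - (((s *\<^sub>R p + q) \<bullet> b) / nb) *\<^sub>R b
     = s *\<^sub>R (p - ((p \<bullet> b) / nb) *\<^sub>R b) + (q - ((q \<bullet> b) / nb) *\<^sub>R b)"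
  by (simp add: inner_add_left add_divide_distrib scaleR_add_left scaleR_diff_right algebra_simps)

lemma step2:
  fixes x y :: "real^'n" and r c1 \<rho> :: real
  assumes x1: "norm x = 1" and dx: "proj_dist x u \<le> r"
    and y1: "norm y = 1" and dy: "proj_dist y u \<le> r"
    and c1: "c1 = 1 - r^2" and c1th: "c1 > \<theta>" and c1pos: "c1 > 0" and rpos: "r \<ge> 0"
    and H1: "k * r + \<theta> * L \<le> r * (L * (c1 - \<theta>))"
    and H2: "L * r^2 / c1 + k + \<theta> * L \<le> \<rho> * (L * (c1 - \<theta>))"
    and rho0: "\<rho> \<ge> 0"
  shows "proj_dist (proj_act S x) (proj_act S y) \<le> \<rho> * proj_dist x y"
proof -
  define a where "a = S *v x"
  define b where "b = S *v y"
  define t where "t = x \<bullet> y"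
  define w where "w = x - t *\<^sub>R y"
  define nb where "nb = (norm b)^2"
  define Q where "Q = (\<lambda>z::real^'n. z - ((z \<bullet> b) / nb) *\<^sub>R b)"
  define \<alpha> where "\<alpha> = w \<bullet> u"
  define w' where "w' = w - \<alpha> *\<^sub>R u"
  define z where "z = M *v w' + (S - M) *v w"
  have anz: "a \<noteq> 0" unfolding a_def by (rule step1(1)[OF x1 dx c1 c1th])
  have bnz: "b \<noteq> 0" unfolding b_def by (rule step1(1)[OF y1 dy c1 c1th])
  have na: "norm a \<ge> L * (c1 - \<theta>)" unfolding a_def by (rule step1(2)[OF x1 dx c1 c1th])
  have nbpos: "nb > 0" unfolding nb_def using bnz by simp
  have bb: "b \<bullet> b = nb" unfolding nb_def by (simp add: dot_square_norm)
  have uu: "u \<bullet> u = 1" using u1 by (simp add: dot_square_norm)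
  have yy: "y \<bullet> y = 1" using y1 by (simp add: dot_square_norm)
  have pd: "proj_dist (proj_act S x) (proj_act S y) = norm (Q a) / norm a"
    unfolding proj_act_def Q_def nb_def a_def b_def by (rule act_dist2[OF anz[unfolded a_def] bnz[unfolded b_def]])
  have xw: "x = w + t *\<^sub>R y" unfolding w_def by simp
  have aw: "a = S *v w + t *\<^sub>R b"
    unfolding a_def b_def by (subst xw) (simp add: matrix_vector_right_distrib matrix_vector_mult_scaleR)
  have Qa: "Q a = Q (S *v w)"
  proof -
    have "(a \<bullet> b) / nb = ((S *v w) \<bullet> b) / nb + t"
      unfolding aw using nbpos by (simp add: inner_add_left bb add_divide_distrib)
    then show ?thesis unfolding Q_def by (simp add: aw algebra_simps)
  qed
  have Sw: "S *v w = (\<alpha> * L) *\<^sub>R u + z"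
    unfolding z_def w'_def \<alpha>_def using Sx_split[of w] Mx_split[of w] by simp
  have QSw: "Q (S *v w) = (\<alpha> * L) *\<^sub>R Q u + Q z"
    unfolding Sw Q_def by (rule Q_lin)
  define bh where "bh = (1 / norm b) *\<^sub>R b"
  have bh1: "norm bh = 1" unfolding bh_def using bnz by simp
  have Qu: "Q u = u - (u \<bullet> bh) *\<^sub>R bh"
    unfolding Q_def bh_def nb_def by (simp add: power2_eq_square)
  have "norm (Q u) = proj_dist u bh" unfolding Qu by (rule pd_unit[OF u1 bh1, symmetric])
  also have "\<dots> = proj_dist bh u" unfolding proj_dist_def by (simp add: inner_commute)
  also have "\<dots> \<le> r" unfolding bh_def b_def
    using step1b(1)[OF y1 dy c1 c1th H1] unfolding proj_act_def .
  finally have nQu: "norm (Q u) \<le> r" .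
  have unz: "u \<noteq> 0" using u1 by auto
  have w'u: "w' \<bullet> u = 0" unfolding w'_def \<alpha>_def by (rule perp_u)
  have nw': "norm w' \<le> norm w"
    using perp_le[OF unz, of w] u1 unfolding w'_def \<alpha>_def by simp
  have "norm (Q z) \<le> norm z" unfolding Q_def nb_def by (rule perp_le[OF bnz])
  also have "\<dots> \<le> norm (M *v w') + norm ((S - M) *v w)" unfolding z_def by (rule norm_triangle_ineq)
  also have "norm (M *v w') \<le> k * norm w"
  proof -
    have "norm (M *v w') \<le> k * norm w'" using Mperp w'u by blast
    also have "\<dots> \<le> k * norm w" using nw' kpos by (rule mult_left_mono)
    finally show ?thesis .
  qed
  also have "norm ((S - M) *v w) \<le> \<theta> * L * norm w" using Eb by blast
  finally have nQz: "norm (Q z) \<le> (k + \<theta> * L) * norm w" by (simp add: algebra_simps)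
  define cy where "cy = y \<bullet> u"
  define y' where "y' = y - cy *\<^sub>R u"
  have ny': "norm y' \<le> r" using decomp(1)[OF y1 u1 dy] unfolding y'_def cy_def .
  have cyge: "\<bar>cy\<bar> \<ge> c1" using decomp(2)[OF y1 u1 dy] unfolding cy_def c1 .
  have wy: "w \<bullet> y = 0" unfolding w_def t_def by (simp add: inner_diff_left yy)
  have "w' \<bullet> y' = w \<bullet> y - cy * (w \<bullet> u) - \<alpha> * (u \<bullet> y) + \<alpha> * cy * (u \<bullet> u)"
    unfolding w'_def y'_def by (simp add: inner_diff_left inner_diff_right algebra_simps)
  also have "\<dots> = - (\<alpha> * cy)" unfolding wy uu cy_def \<alpha>_def by (simp add: inner_commute)
  finally have "\<bar>\<alpha> * cy\<bar> = \<bar>w' \<bullet> y'\<bar>" by simp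
  also have "\<dots> \<le> norm w' * norm y'" by (rule Cauchy_Schwarz_ineq2)
  also have "\<dots> \<le> norm w * r" using nw' ny' by (intro mult_mono) auto
  finally have acy: "\<bar>\<alpha> * cy\<bar> \<le> norm w * r" .
  have "\<bar>\<alpha>\<bar> * c1 \<le> \<bar>\<alpha>\<bar> * \<bar>cy\<bar>" using cyge by (intro mult_left_mono) auto
  also have "\<dots> \<le> norm w * r" using acy by (simp add: abs_mult)
  finally have ab: "\<bar>\<alpha>\<bar> \<le> norm w * r / c1" using c1pos by (simp add: le_divide_eq)
  have "norm (Q a) \<le> norm ((\<alpha> * L) *\<^sub>R Q u) + norm (Q z)" unfolding Qa QSw by (rule norm_triangle_ineq)
  also have "norm ((\<alpha> * L) *\<^sub>R Q u) = \<bar>\<alpha>\<bar> * L * norm (Q u)" using Lpos by (simp add: abs_mult)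
  also have "\<dots> \<le> (norm w * r / c1) * L * r"
    using ab nQu Lpos rpos c1pos by (intro mult_mono) auto
  also have "(norm w * r / c1) * L * r = (L * r^2 / c1) * norm w" by (simp add: power2_eq_square)
  finally have "norm (Q a) \<le> (L * r^2 / c1) * norm w + (k + \<theta> * L) * norm w" using nQz by linarith
  also have "\<dots> = (L * r^2 / c1 + k + \<theta> * L) * norm w" by (simp add: algebra_simps)
  also have "\<dots> \<le> (\<rho> * (L * (c1 - \<theta>))) * norm w" using H2 by (intro mult_right_mono) auto
  also have "\<dots> \<le> (\<rho> * norm a) * norm w" using na rho0 by (intro mult_right_mono mult_left_mono) auto
  finally have nQa: "norm (Q a) \<le> \<rho> * norm w * norm a" by (simp add: algebra_simps)
  have "proj_dist (proj_act S x) (proj_act S y) \<le> \<rho> * norm w"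
    unfolding pd using nQa anz by (simp add: divide_le_eq)
  also have "norm w = proj_dist x y" unfolding w_def t_def by (rule pd_unit[OF x1 y1, symmetric])
  finally show ?thesis .
qed

end

lemma arith_params:
  fixes L k \<theta> :: real
  assumes Lpos: "L > 0" and k0: "0 \<le> k" and kL: "k < L" and thpos: "\<theta> > 0"
    and thle: "\<theta> \<le> (1/40) * (1 - k / L) powr (3/2)"
  defines "\<delta> \<equiv> 1 - k / L"
  defines "r \<equiv> 2 * \<theta> / \<delta>"
  defines "c1 \<equiv> 1 - r^2"
  defines "\<rho> \<equiv> 1 - (4/5) * \<delta>"
  shows "0 < \<delta>" "\<delta> \<le> 1" "r \<ge> 0" "c1 > \<theta>" "c1 > 0" "0 < \<rho>" "\<rho> < 1"
    "k * r + \<theta> * L \<le> r * (L * (c1 - \<theta>))"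
    "L * r^2 / c1 + k + \<theta> * L \<le> \<rho> * (L * (c1 - \<theta>))"
proof -
  have kL': "k / L < 1" using kL Lpos by simp
  have kL0: "k / L \<ge> 0" using k0 Lpos by simp
  show d0: "0 < \<delta>" unfolding \<delta>_def using kL' by simp
  show d1: "\<delta> \<le> 1" unfolding \<delta>_def using kL0 by simp
  have "\<delta> powr (3/2) = \<delta> powr (1 + 1/2)" by simp
  also have "\<dots> = \<delta> powr 1 * \<delta> powr (1/2)" by (rule powr_add)
  also have "\<dots> = \<delta> * sqrt \<delta>" using d0 by (simp add: powr_half_sqrt)
  finally have pw: "\<delta> powr (3/2) = \<delta> * sqrt \<delta>" .
  have th1: "\<theta> \<le> \<delta> * sqrt \<delta> / 40" using thle pw unfolding \<delta>_def by simp
  have sq1: "sqrt \<delta> \<le> 1" using d1 by simp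
  have sq0: "sqrt \<delta> \<ge> 0" using d0 by simp
  have th40: "\<theta> \<le> \<delta> / 40"
  proof -
    have "\<delta> * sqrt \<delta> \<le> \<delta> * 1" using sq1 d0 by (intro mult_left_mono) auto
    then show ?thesis using th1 by simp
  qed
  show r0: "r \<ge> 0" unfolding r_def using thpos d0 by simp
  have rth: "\<theta> = r * \<delta> / 2" unfolding r_def using d0 by simp
  have "r \<le> sqrt \<delta> / 20"
  proof -
    have "2 * \<theta> \<le> 2 * (\<delta> * sqrt \<delta> / 40)" using th1 by simp
    then have "2 * \<theta> / \<delta> \<le> (2 * (\<delta> * sqrt \<delta> / 40)) / \<delta>" using d0 by (intro divide_right_mono) auto
    also have "\<dots> = sqrt \<delta> / 20" using d0 by simp
    finally show ?thesis unfolding r_def .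
  qed
  then have "r^2 \<le> (sqrt \<delta> / 20)^2" using r0 by (intro power_mono) auto
  also have "\<dots> = \<delta> / 400" using d0 by (simp add: power_divide)
  finally have R: "r^2 \<le> \<delta> / 400" .
  have c1ge: "c1 \<ge> 399 / 400" unfolding c1_def using R d1 by simp
  show "c1 > \<theta>" using c1ge th40 d1 by simp
  show c1pos: "c1 > 0" using c1ge by simp
  show "0 < \<rho>" "\<rho> < 1" unfolding \<rho>_def using d0 d1 by simp_all
  have k: "k = L * (1 - \<delta>)" unfolding \<delta>_def using Lpos by simp
  have "k * r + \<theta> * L = r * L * (1 - \<delta> / 2)" unfolding k rth by (simp add: algebra_simps)
  also have "\<dots> \<le> r * L * (c1 - \<theta>)"
  proof (intro mult_left_mono)
    show "1 - \<delta> / 2 \<le> c1 - \<theta>" unfolding c1_def using R th40 d0 by simp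
    show "0 \<le> r * L" using r0 Lpos by simp
  qed
  finally show "k * r + \<theta> * L \<le> r * (L * (c1 - \<theta>))" by (simp add: algebra_simps)
  have Rc: "r^2 / c1 \<le> \<delta> / 399"
  proof -
    have "r^2 / c1 \<le> (\<delta> / 400) / c1" using R c1pos by (intro divide_right_mono) auto
    also have "\<dots> \<le> (\<delta> / 400) / (399/400)" using c1ge d0 by (intro divide_left_mono) auto
    finally show ?thesis by simp
  qed
  have "(1 - (4/5) * \<delta>) * (c1 - \<theta>) = (c1 - \<theta>) - (4/5) * \<delta> * (c1 - \<theta>)" by (simp add: algebra_simps)
  moreover have "(4/5) * \<delta> * (c1 - \<theta>) \<le> (4/5) * \<delta>"
  proof -
    have "c1 - \<theta> \<le> 1" unfolding c1_def using thpos zero_le_power2[of r] by linarith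
    moreover have "0 \<le> 4/5 * \<delta>" using d0 by simp
    ultimately show ?thesis using mult_left_mono[of "c1 - \<theta>" 1 "4/5 * \<delta>"] by simp
  qed
  ultimately have rhs: "(1 - (4/5) * \<delta>) * (c1 - \<theta>) \<ge> c1 - \<theta> - (4/5) * \<delta>" by linarith
  have "r^2 / c1 + (1 - \<delta>) + \<theta> \<le> (1 - (4/5) * \<delta>) * (c1 - \<theta>)"
    using rhs Rc R th40 d0 unfolding c1_def by simp
  then have "L * (r^2 / c1 + (1 - \<delta>) + \<theta>) \<le> L * ((1 - (4/5) * \<delta>) * (c1 - \<theta>))"
    using Lpos by (intro mult_left_mono) auto
  then show "L * r^2 / c1 + k + \<theta> * L \<le> \<rho> * (L * (c1 - \<theta>))"
    unfolding \<rho>_def k by (simp add: algebra_simps)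
qed

lemma exp_le:
  fixes P :: "'a measure" and f :: "'a \<Rightarrow> real" and c :: real
  assumes P: "prob_space P" and ae: "AE \<omega> in P. f \<omega> \<le> c" and c0: "c \<ge> 0"
  shows "prob_space.expectation P f \<le> c"
proof -
  interpret prob_space P by (rule P)
  have "integral\<^sup>L P f \<le> integral\<^sup>L P (\<lambda>_. c)"
    using integral_mono_AE'[of P "\<lambda>_. c" f] ae c0 by simp
  also have "\<dots> = c" by (simp add: prob_space)
  finally show ?thesis .
qed

theorem lemma5p2:
  fixes M :: "real^'n^'n"
    and lam :: "nat \<Rightarrow> real" and v :: "nat \<Rightarrow> real^'n"
    and u :: "real^'n" and \<theta> :: real
    and P :: "'a measure" and S :: "nat \<Rightarrow> 'a \<Rightarrow> real^'n^'n"
  assumes dim: "CARD('n) \<ge> 2"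
    and sym: "transpose M = M"
    and eigbasis: "\<forall>i\<in>{1..CARD('n)}. \<forall>j\<in>{1..CARD('n)}. v i \<bullet> v j = (if i = j then 1 else 0)"
    and eigvec: "\<forall>i\<in>{1..CARD('n)}. M *v v i = lam i *\<^sub>R v i"
    and ordered: "\<forall>i. 1 \<le> i \<and> i < CARD('n) \<longrightarrow> \<bar>lam (Suc i)\<bar> \<le> \<bar>lam i\<bar>"
    and lam1_pos: "lam 1 > 0"
    and gap: "lam 1 > \<bar>lam 2\<bar>"
    and u_unit: "norm u = 1"
    and u_eig: "M *v u = lam 1 *\<^sub>R u"
    and theta_pos: "0 < \<theta>"
    and theta_le: "\<theta> \<le> (1/40) * (1 - \<bar>lam 2\<bar> / lam 1) powr (3/2)"
    and P: "prob_space P"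
    and meas: "\<forall>l\<ge>1. S l \<in> borel_measurable P"
    and indep: "prob_space.indep_vars P (\<lambda>_. borel) S {1..}"
    and ident: "\<forall>l\<ge>1. distr P borel (S l) = distr P borel (S 1)"
    and mean: "\<forall>l\<ge>1. integrable P (S l) \<and> prob_space.expectation P (S l) = M"
    and bound: "\<forall>l\<ge>1. AE \<omega> in P. op_norm2 (S l \<omega> - M) \<le> \<theta> * op_norm2 M"
    and nonsing: "\<forall>l\<ge>1. AE \<omega> in P. invertible (S l \<omega>)"
    and irred: "\<forall>l\<ge>1. \<forall>V :: (real^'n) set. subspace V \<and> V \<noteq> {0} \<and> V \<noteq> UNIV \<longrightarrow>
                   \<not> (AE \<omega> in P. (\<lambda>x. S l \<omega> *v x) ` V \<subseteq> V)"
  defines "G \<equiv> {x. proj_pt x \<and> proj_dist x u \<le> 2 * \<theta> / (1 - \<bar>lam 2\<bar> / lam 1)}"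
    and "\<rho> \<equiv> 1 - (4/5) * (1 - \<bar>lam 2\<bar> / lam 1)"
  shows "(\<forall>l\<ge>1. AE \<omega> in P. \<forall>x\<in>G. proj_act (S l \<omega>) x \<in> G)
    \<and> (0 < \<rho> \<and> \<rho> < 1)
    \<and> (\<forall>l\<ge>1. \<forall>x\<in>G. \<forall>y\<in>G. y \<noteq> x \<and> y \<noteq> -x \<longrightarrow>
          prob_space.expectation P (\<lambda>\<omega>. proj_dist (proj_act (S l \<omega>) x) (proj_act (S l \<omega>) y))
            \<le> \<rho> * proj_dist x y)"
proof -
  let ?L = "lam 1" and ?k = "\<bar>lam 2\<bar>"
  define r where "r = 2 * \<theta> / (1 - \<bar>lam 2\<bar> / lam 1)"
  define c1 where "c1 = 1 - r^2"
  note AP = arith_params[OF lam1_pos abs_ge_zero gap theta_pos theta_le]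
  have r0: "r \<ge> 0" and c1th: "c1 > \<theta>" and c1pos: "c1 > 0"
    and H1: "?k * r + \<theta> * ?L \<le> r * (?L * (c1 - \<theta>))"
    and H2: "?L * r^2 / c1 + ?k + \<theta> * ?L \<le> \<rho> * (?L * (c1 - \<theta>))"
    using AP unfolding r_def c1_def \<rho>_def by auto
  have rho: "0 < \<rho> \<and> \<rho> < 1" using AP unfolding \<rho>_def by auto
  note SP = spectral[OF dim sym eigbasis eigvec ordered lam1_pos gap u_unit u_eig]
  have opM: "op_norm2 M \<le> ?L" unfolding op_norm2_def using SP(1) by (intro onorm_le) auto
  have Gdef: "x \<in> G \<longleftrightarrow> norm x = 1 \<and> proj_dist x u \<le> r" for x
    unfolding G_def r_def proj_pt_def by simp
  have good: "\<forall>z. norm ((T - M) *v z) \<le> \<theta> * ?L * norm z"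
    if "op_norm2 (T - M) \<le> \<theta> * op_norm2 M" for T :: "real^'n^'n"
  proof
    fix z
    have "norm ((T - M) *v z) \<le> op_norm2 (T - M) * norm z"
      unfolding op_norm2_def by (rule onorm) simp
    also have "\<dots> \<le> (\<theta> * ?L) * norm z"
    proof (intro mult_right_mono)
      have "\<theta> * op_norm2 M \<le> \<theta> * ?L" using opM theta_pos by (intro mult_left_mono) auto
      then show "op_norm2 (T - M) \<le> \<theta> * ?L" using that by linarith
    qed simp
    finally show "norm ((T - M) *v z) \<le> \<theta> * ?L * norm z" .
  qed
  have P1: "\<forall>l\<ge>1. AE \<omega> in P. \<forall>x\<in>G. proj_act (S l \<omega>) x \<in> G"
  proof (intro allI impI)
    fix l :: nat assume l: "l \<ge> 1"
    show "AE \<omega> in P. \<forall>x\<in>G. proj_act (S l \<omega>) x \<in> G"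
      using bound[rule_format, OF l]
    proof (rule eventually_mono)
      fix \<omega> assume b: "op_norm2 (S l \<omega> - M) \<le> \<theta> * op_norm2 M"
      show "\<forall>x\<in>G. proj_act (S l \<omega>) x \<in> G"
      proof
        fix x assume "x \<in> G"
        then have x1: "norm x = 1" and dx: "proj_dist x u \<le> r" using Gdef by auto
        note st = step1b[OF u_unit u_eig lam1_pos SP(2) abs_ge_zero good[OF b] less_imp_le[OF theta_pos] x1 dx c1_def c1th H1]
        show "proj_act (S l \<omega>) x \<in> G" using st Gdef by auto
      qed
    qed
  qed
  have P2: "\<forall>l\<ge>1. \<forall>x\<in>G. \<forall>y\<in>G. y \<noteq> x \<and> y \<noteq> -x \<longrightarrow>
          prob_space.expectation P (\<lambda>\<omega>. proj_dist (proj_act (S l \<omega>) x) (proj_act (S l \<omega>) y))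
            \<le> \<rho> * proj_dist x y"
  proof (intro allI impI ballI)
    fix l :: nat and x y assume l: "l \<ge> 1" and xG: "x \<in> G" and yG: "y \<in> G"
    have x1: "norm x = 1" and dx: "proj_dist x u \<le> r" using xG Gdef by auto
    have y1: "norm y = 1" and dy: "proj_dist y u \<le> r" using yG Gdef by auto
    have rho0: "\<rho> \<ge> 0" using rho by simp
    have pd0: "proj_dist x y \<ge> 0" using pd_unit[OF x1 y1] by simp
    show "prob_space.expectation P (\<lambda>\<omega>. proj_dist (proj_act (S l \<omega>) x) (proj_act (S l \<omega>) y))
            \<le> \<rho> * proj_dist x y"
    proof (rule exp_le[OF P])
      show "0 \<le> \<rho> * proj_dist x y" using rho0 pd0 by simp
      show "AE \<omega> in P. proj_dist (proj_act (S l \<omega>) x) (proj_act (S l \<omega>) y) \<le> \<rho> * proj_dist x y"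
        using bound[rule_format, OF l]
      proof (rule eventually_mono)
        fix \<omega> assume b: "op_norm2 (S l \<omega> - M) \<le> \<theta> * op_norm2 M"
        show "proj_dist (proj_act (S l \<omega>) x) (proj_act (S l \<omega>) y) \<le> \<rho> * proj_dist x y"
          by (rule step2[OF u_unit u_eig lam1_pos SP(2) abs_ge_zero good[OF b] less_imp_le[OF theta_pos]
                x1 dx y1 dy c1_def c1th c1pos r0 H1 H2 rho0])
      qed
    qed
  qed
  show ?thesis using P1 P2 rho by blast
qed

end
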